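(* Let $L \geq 2$, $m = L+1$, $\gamma = (L+1)^3$, and for $i \in \{0,\ldots,L\}$, $k\in[m]$ let $\pi_i(A_k) = w_i(k)/\sum_{h=1}^m w_i(h)$ with $w_i(k) = \gamma^{2(i+1)k - k^2+1} + \sum_{r=0}^L\gamma^{(2r+1)(i+1)-r^2-r}$. Let $\overline{\pi}(\xi) = \prod_{i=0}^L \pi_i(A_{\xi_i})$ for $\xi\in[m]^{L+1}$, let $\lambda = (1, 2, \ldots, m)$, let $\mathcal{X}_\lambda$ be the set of states reachable from $\lambda$ by finitely many swaps of adjacent levels, and $\overline{\pi}_\lambda = \overline{\pi}/\overline{\pi}(\mathcal{X}_\lambda)$ on $\mathcal{X}_\lambda$. Let $S \subseteq \mathcal{X}_\lambda$ be the set of states $\xi$ for which there is a sequence $\lambda=\tau^0,\ldots,\tau^N=\xi$, each obtained from the previous by swapping the entries of two adjacent levels, such that every $\tau^s$ differs from $\lambda$ in at most $\lfloor\log_2 L\rfloor - 1$ coordinates, and let $S^C = \mathcal{X}_\lambda\setminus S$. Let $\overline{P}_{pt}$ be a stochastic matrix on $\mathcal{X}_\lambda$ such that $\overline{P}_{pt}(\xi,\tilde\xi) > 0$ with $\xi\neq\tilde\xi$ only if $\tilde\xi$ is obtained from $\xi$ by swapping the entries of two adjacent levels. Then $$\sum_{\xi\in S,\,\tilde\xi\in S^C}\overline{\pi}_\lambda(\xi)\overline{P}_{pt}(\xi,\tilde\xi) \leq 4e\left(\frac{1}{L+1}\right)^{\lfloor\log_2 L\rfloor - 2}.$$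
   Context: A swap of adjacent levels maps $\xi$ to $(j-1,j)\xi$, the vector with entries at positions $j-1$ and $j$ exchanged, $j\in\{1,\ldots,L\}$. Two states differ in coordinate $\ell$ if their $\ell$-th entries are unequal. In the paper $\overline{P}_{pt}$ is the projected parallel tempering chain of a hypothetical instance in which the only moves between modes are swaps of adjacent temperature levels. *)

theory Defs
  imports Complex_Main
begin

text \<open>States are lists of length L+1 (levels 0..L) with entries in {1..m}.
  Swap of adjacent levels j-1 and j, for j in {1..L}.\<close>

definition swap_adj :: "nat \<Rightarrow> nat list \<Rightarrow> nat list" where
  "swap_adj j xi = xi[j - 1 := xi ! j, j := xi ! (j - 1)]"

definition adj_swap :: "nat \<Rightarrow> nat list \<Rightarrow> nat list \<Rightarrow> bool" where
  "adj_swap L xi eta \<longleftrightarrow> (\<exists>j\<in>{1..L}. eta = swap_adj j xi)"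

definition gam :: "nat \<Rightarrow> real" where
  "gam L = (real L + 1) ^ 3"

definition wt :: "nat \<Rightarrow> nat \<Rightarrow> nat \<Rightarrow> real" where
  "wt L i k = gam L powi (2 * (int i + 1) * int k - (int k)^2 + 1)
     + (\<Sum>r\<in>{0..L}. gam L powi ((2 * int r + 1) * (int i + 1) - (int r)^2 - int r))"

definition pii :: "nat \<Rightarrow> nat \<Rightarrow> nat \<Rightarrow> real" where
  "pii L i k = wt L i k / (\<Sum>h\<in>{1..L+1}. wt L i h)"

definition pibar :: "nat \<Rightarrow> nat list \<Rightarrow> real" where
  "pibar L xi = (\<Prod>i\<in>{0..L}. pii L i (xi ! i))"

definition lam :: "nat \<Rightarrow> nat list" where
  "lam L = [1..<L+2]"

definition Xlam :: "nat \<Rightarrow> nat list set" where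
  "Xlam L = {xi. (adj_swap L)\<^sup>*\<^sup>* (lam L) xi}"

definition pilam :: "nat \<Rightarrow> nat list \<Rightarrow> real" where
  "pilam L xi = pibar L xi / (\<Sum>eta\<in>Xlam L. pibar L eta)"

definition ndiff :: "nat list \<Rightarrow> nat list \<Rightarrow> nat" where
  "ndiff xi eta = card {l. l < length xi \<and> xi ! l \<noteq> eta ! l}"

definition Dbound :: "nat \<Rightarrow> int" where
  "Dbound L = \<lfloor>log 2 (real L)\<rfloor> - 1"

definition Sset :: "nat \<Rightarrow> nat list set" where
  "Sset L = {xi. (\<lambda>a b. adj_swap L a b \<and> int (ndiff a (lam L)) \<le> Dbound L
                      \<and> int (ndiff b (lam L)) \<le> Dbound L)\<^sup>*\<^sup>* (lam L) xi}"

end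

theory Submission imports Defs "HOL-Library.FuncSet" begin

lemma gam_ge: "L \<ge> 2 \<Longrightarrow> gam L \<ge> 27"
proof -
  assume "L \<ge> 2"
  hence "real L + 1 \<ge> 3" by simp
  hence "(real L + 1)^3 \<ge> 3^3" by (rule power_mono) simp
  thus ?thesis by (simp add: gam_def)
qed

lemma wt_top:
  assumes "L \<ge> 2"
  shows "wt L i (i+1) \<ge> gam L powi ((int i + 1)^2 + 1)"
proof -
  have g: "gam L > 0" using gam_ge[OF assms] by simp
  have "(\<Sum>r\<in>{0..L}. gam L powi ((2 * int r + 1) * (int i + 1) - (int r)^2 - int r)) \<ge> 0"
    using g by (intro sum_nonneg) simp
  moreover have "2 * (int i + 1) * int (i+1) - (int (i+1))^2 + 1 = (int i + 1)^2 + 1"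
    by (simp add: power2_eq_square algebra_simps)
  ultimately show ?thesis unfolding wt_def by simp
qed

lemma first_bound:
  assumes "L \<ge> 2" and "k \<noteq> i + 1"
  shows "gam L powi (2 * (int i + 1) * int k - (int k)^2 + 1)
     \<le> (if k \<in> {i, i+2} then gam L powi ((int i + 1)^2) else 0) + gam L powi ((int i + 1)^2 - 3)"
proof -
  have g: "gam L \<ge> 1" using gam_ge[OF assms(1)] by simp
  have eq: "2 * (int i + 1) * int k - (int k)^2 + 1 = (int i + 1)^2 + 1 - (int k - int i - 1)^2"
    by (simp add: power2_eq_square algebra_simps)
  have nz: "int k - int i - 1 \<noteq> 0" using assms(2) by simp
  hence "\<bar>int k - int i - 1\<bar> \<ge> 1" by linarith
  hence "1^2 \<le> \<bar>int k - int i - 1\<bar>^2" by (rule power_mono) simp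
  hence sq1: "(int k - int i - 1)^2 \<ge> 1" by simp
  show ?thesis
  proof (cases "k \<in> {i, i+2}")
    case True
    have "gam L powi (2 * (int i + 1) * int k - (int k)^2 + 1) \<le> gam L powi ((int i + 1)^2)"
      unfolding eq using g sq1 by (intro power_int_increasing) auto
    moreover have "gam L powi ((int i + 1)^2 - 3) \<ge> 0" using g by simp
    ultimately show ?thesis using True by simp
  next
    case False
    hence "int k - int i - 1 \<noteq> 1" "int k - int i - 1 \<noteq> -1" using nz by auto
    hence "\<bar>int k - int i - 1\<bar> \<ge> 2" using nz by linarith
    hence "2^2 \<le> \<bar>int k - int i - 1\<bar>^2" by (rule power_mono) simp
    hence "(int k - int i - 1)^2 \<ge> 4" by simp
    hence "gam L powi (2 * (int i + 1) * int k - (int k)^2 + 1) \<le> gam L powi ((int i + 1)^2 - 3)"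
      unfolding eq using g by (intro power_int_increasing) auto
    thus ?thesis using False by simp
  qed
qed


lemma consec_prod:
  fixes x :: int
  shows "x * (x - 1) \<ge> 0" and "x \<noteq> 0 \<Longrightarrow> x \<noteq> 1 \<Longrightarrow> x * (x - 1) \<ge> 2"
proof -
  show "x * (x - 1) \<ge> 0"
  proof (cases "x \<ge> 1")
    case True thus ?thesis by simp
  next
    case False
    hence "x \<le> 0" by simp
    thus ?thesis by (simp add: mult_nonpos_nonpos)
  qed
next
  assume "x \<noteq> 0" "x \<noteq> 1"
  hence "x \<ge> 2 \<or> x \<le> -1" by linarith
  thus "x * (x - 1) \<ge> 2"
  proof
    assume "x \<ge> 2"
    hence "2 * 1 \<le> x * (x - 1)" by (intro mult_mono) auto
    thus ?thesis by simp
  next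
    assume h: "x \<le> -1"
    hence "1 * 2 \<le> (-x) * (1 - x)" by (intro mult_mono) auto
    thus ?thesis by (simp add: algebra_simps)
  qed
qed

lemma second_bound:
  assumes "L \<ge> 2"
  shows "gam L powi ((2 * int r + 1) * (int i + 1) - (int r)^2 - int r)
     \<le> (if r \<in> {i, i+1} then gam L powi ((int i + 1)^2) else 0) + gam L powi ((int i + 1)^2 - 2)"
proof -
  have g: "gam L \<ge> 1" using gam_ge[OF assms(1)] by simp
  have eq: "(2 * int r + 1) * (int i + 1) - (int r)^2 - int r
       = (int i + 1)^2 - (int r - int i) * (int r - int i - 1)"
    by (simp add: power2_eq_square algebra_simps)
  show ?thesis
  proof (cases "r \<in> {i, i+1}")
    case True
    have "gam L powi ((2 * int r + 1) * (int i + 1) - (int r)^2 - int r) \<le> gam L powi ((int i + 1)^2)"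
      unfolding eq using g consec_prod(1)[of "int r - int i"] by (intro power_int_increasing) auto
    moreover have "gam L powi ((int i + 1)^2 - 2) \<ge> 0" using g by simp
    ultimately show ?thesis using True by simp
  next
    case False
    hence "int r - int i \<noteq> 0" "int r - int i \<noteq> 1" by auto
    from consec_prod(2)[OF this]
    have "gam L powi ((2 * int r + 1) * (int i + 1) - (int r)^2 - int r) \<le> gam L powi ((int i + 1)^2 - 2)"
      unfolding eq using g by (intro power_int_increasing) auto
    thus ?thesis using False by simp
  qed
qed

lemma sum_if_two:
  fixes c :: real
  assumes "finite A" "c \<ge> 0"
  shows "(\<Sum>k\<in>A. if k \<in> {a, b} then c else 0) \<le> 2 * c"
proof -
  have "(\<Sum>k\<in>A. if k \<in> {a, b} then c else 0) = (\<Sum>k\<in>A \<inter> {a,b}. c)"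
    using sum.inter_restrict[OF assms(1), of "\<lambda>_. c" "{a,b}"] by simp
  also have "\<dots> = real (card (A \<inter> {a,b})) * c" by simp
  also have "\<dots> \<le> real (card {a,b}) * c"
    using assms(2) by (intro mult_right_mono) (auto intro: card_mono)
  also have "\<dots> \<le> 2 * c"
    using assms(2) by (intro mult_right_mono) (auto simp: card_insert_if)
  finally show ?thesis .
qed

lemma C_bound:
  assumes "L \<ge> 2"
  shows "(\<Sum>r\<in>{0..L}. gam L powi ((2 * int r + 1) * (int i + 1) - (int r)^2 - int r))
     \<le> 2 * gam L powi ((int i + 1)^2) + real (L+1) * gam L powi ((int i + 1)^2 - 2)"
proof -
  have g: "gam L \<ge> 1" using gam_ge[OF assms(1)] by simp
  have "(\<Sum>r\<in>{0..L}. gam L powi ((2 * int r + 1) * (int i + 1) - (int r)^2 - int r))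
     \<le> (\<Sum>r\<in>{0..L}. (if r \<in> {i, i+1} then gam L powi ((int i + 1)^2) else 0) + gam L powi ((int i + 1)^2 - 2))"
    by (intro sum_mono second_bound assms)
  also have "\<dots> = (\<Sum>r\<in>{0..L}. (if r \<in> {i, i+1} then gam L powi ((int i + 1)^2) else 0))
       + real (L+1) * gam L powi ((int i + 1)^2 - 2)"
    by (simp only: sum.distrib sum_constant card_atLeastAtMost) simp
  also have "\<dots> \<le> 2 * gam L powi ((int i + 1)^2) + real (L+1) * gam L powi ((int i + 1)^2 - 2)"
    using g by (intro add_right_mono sum_if_two) auto
  finally show ?thesis .
qed

lemma first_sum_bound:
  assumes "L \<ge> 2" "i \<le> L"
  shows "(\<Sum>k\<in>{1..L+1}-{i+1}. gam L powi (2 * (int i + 1) * int k - (int k)^2 + 1))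
     \<le> 2 * gam L powi ((int i + 1)^2) + real L * gam L powi ((int i + 1)^2 - 3)"
proof -
  have g: "gam L \<ge> 1" using gam_ge[OF assms(1)] by simp
  have c: "card ({1..L+1}-{i+1}) \<le> L" using assms(2) by (simp add: card_Diff_singleton_if)
  have "(\<Sum>k\<in>{1..L+1}-{i+1}. gam L powi (2 * (int i + 1) * int k - (int k)^2 + 1))
     \<le> (\<Sum>k\<in>{1..L+1}-{i+1}. (if k \<in> {i, i+2} then gam L powi ((int i + 1)^2) else 0) + gam L powi ((int i + 1)^2 - 3))"
    by (intro sum_mono first_bound assms) auto
  also have "\<dots> = (\<Sum>k\<in>{1..L+1}-{i+1}. (if k \<in> {i, i+2} then gam L powi ((int i + 1)^2) else 0))
       + real (card ({1..L+1}-{i+1})) * gam L powi ((int i + 1)^2 - 3)"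
    by (simp only: sum.distrib sum_constant)
  also have "\<dots> \<le> 2 * gam L powi ((int i + 1)^2) + real L * gam L powi ((int i + 1)^2 - 3)"
    using g c by (intro add_mono sum_if_two mult_right_mono) auto
  finally show ?thesis .
qed


lemma ratio_bound:
  assumes "L \<ge> 2" "i \<le> L"
  shows "(\<Sum>k\<in>{1..L+1}-{i+1}. wt L i k) \<le> (2 * real L + 3) / gam L * wt L i (i+1)"
proof -
  define g where "g = gam L"
  define a where "a = g powi ((int i + 1)^2)"
  define C where "C = (\<Sum>r\<in>{0..L}. gam L powi ((2 * int r + 1) * (int i + 1) - (int r)^2 - int r))"
  have g27: "g \<ge> 27" using gam_ge[OF assms(1)] by (simp add: g_def)
  have a0: "a > 0" using g27 by (simp add: a_def)
  have e3: "g powi ((int i + 1)^2 - 3) = a / g^3"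
    using g27 by (simp add: a_def power_int_diff)
  have e2: "g powi ((int i + 1)^2 - 2) = a / g^2"
    using g27 by (simp add: a_def power_int_diff)
  have e1: "g powi ((int i + 1)^2 + 1) = a * g"
    using g27 by (simp add: a_def power_int_add)
  have card: "card ({1..L+1}-{i+1}) = L" using assms(2) by (simp add: card_Diff_singleton_if)
  have "(\<Sum>k\<in>{1..L+1}-{i+1}. wt L i k)
      = (\<Sum>k\<in>{1..L+1}-{i+1}. gam L powi (2 * (int i + 1) * int k - (int k)^2 + 1)) + real L * C"
    unfolding wt_def C_def by (simp only: sum.distrib sum_constant card)
  also have "\<dots> \<le> (2 * a + real L * (a / g^3)) + real L * (2 * a + real (L+1) * (a / g^2))"
    using first_sum_bound[OF assms] C_bound[OF assms(1), of i] e2 e3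
    unfolding C_def g_def[symmetric] a_def[symmetric]
    by (intro add_mono mult_left_mono) auto
  also have "\<dots> \<le> (2 * real L + 3) * a"
  proof -
    have gL: "real L * (real L + 1) \<le> g"
    proof -
      have "real L * (real L + 1) \<le> (real L + 1) * (real L + 1)" by simp
      also have "\<dots> \<le> (real L + 1) * (real L + 1) * (real L + 1)" by simp
      finally show ?thesis by (simp add: g_def gam_def power3_eq_cube)
    qed
    have gg: "g * 1 \<le> g * g" using g27 by (intro mult_left_mono) auto
    have ggg: "(g * g) * 1 \<le> (g * g) * g" using g27 by (intro mult_left_mono) auto
    have g1: "g \<le> g^2" "g \<le> g^3" using gg ggg by (auto simp: power2_eq_square power3_eq_cube)
    have "real L / g^3 \<le> 1/2"
    proof -
      have "real L \<le> g" using gL by (smt (verit) mult_le_cancel_left1 of_nat_0_le_iff)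
      hence "real L \<le> g^3" using g1 by simp
      moreover have "g^3 > 0" using g27 by simp
      ultimately have "real L / g^3 \<le> 1" by simp
      moreover have "real L / g^3 \<le> real L / g"
        using g27 g1 by (intro divide_left_mono) auto
      moreover have "real L / g \<le> 1/2"
        using gL g27 by (simp add: field_simps) (smt (verit) mult_le_cancel_left1 of_nat_0_le_iff)
      ultimately show ?thesis by linarith
    qed
    moreover have "real L * (real L + 1) / g^2 \<le> 1/2"
    proof -
      have "real L * (real L + 1) / g^2 \<le> g / g^2" using gL g27 by (intro divide_right_mono) auto
      also have "\<dots> = 1 / g" using g27 by (simp add: power2_eq_square)
      also have "\<dots> \<le> 1/2" using g27 by simp
      finally show ?thesis .
    qed
    ultimately have "real L / g^3 + real L * (real L + 1) / g^2 \<le> 1" by linarith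
    hence "a * (real L / g^3 + real L * (real L + 1) / g^2) \<le> a * 1"
      using a0 by (intro mult_left_mono) auto
    thus ?thesis by (simp add: algebra_simps)
  qed
  also have "\<dots> = (2 * real L + 3) / g * (a * g)" using g27 by simp
  also have "\<dots> \<le> (2 * real L + 3) / g * wt L i (i+1)"
    using wt_top[OF assms(1), of i] e1 g27 unfolding g_def[symmetric] a_def[symmetric]
    by (intro mult_left_mono) auto
  finally show ?thesis by (simp add: g_def)
qed


lemma lam_len: "length (lam L) = L + 1" by (simp add: lam_def)

lemma lam_nth: "l < L + 1 \<Longrightarrow> lam L ! l = l + 1"
  unfolding lam_def by (subst nth_upt) auto

lemma Xlam_props:
  assumes "xi \<in> Xlam L"
  shows "length xi = L + 1 \<and> set xi \<subseteq> {1..L+1}"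
proof -
  have "(adj_swap L)\<^sup>*\<^sup>* (lam L) xi" using assms by (simp add: Xlam_def)
  thus ?thesis
  proof (induction rule: rtranclp_induct)
    case base
    show ?case by (auto simp: lam_def)
  next
    case (step y z)
    then obtain j where j: "j \<in> {1..L}" "z = swap_adj j y" by (auto simp: adj_swap_def)
    have len: "length y = L + 1" using step by simp
    have m1: "y ! j \<in> set y" "y ! (j-1) \<in> set y" using j len by auto
    have "set z \<subseteq> insert (y ! (j-1)) (insert (y ! j) (set y))"
      unfolding j(2) swap_adj_def
      by (meson dual_order.trans insert_mono set_update_subset_insert)
    thus ?case using step m1 len j by (auto simp: swap_adj_def)
  qed
qed

lemma Xlam_sub: "Xlam L \<subseteq> {xs. set xs \<subseteq> {1..L+1} \<and> length xs = L + 1}"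
  using Xlam_props by blast

lemma finite_Xlam: "finite (Xlam L)"
  by (rule finite_subset[OF Xlam_sub]) (intro finite_lists_length_eq, simp)

lemma lam_in: "lam L \<in> Xlam L" by (simp add: Xlam_def)

lemma ndiff_swap:
  assumes "length xi = L + 1" "j \<in> {1..L}"
  shows "ndiff (swap_adj j xi) (lam L) \<le> ndiff xi (lam L) + 2"
proof -
  let ?eta = "swap_adj j xi"
  have len: "length ?eta = L + 1" using assms by (simp add: swap_adj_def)
  have sub: "{l. l < length ?eta \<and> ?eta ! l \<noteq> lam L ! l}
      \<subseteq> {l. l < length xi \<and> xi ! l \<noteq> lam L ! l} \<union> {j-1, j}"
    using assms len by (auto simp: swap_adj_def nth_list_update)
  have "ndiff ?eta (lam L) \<le> card ({l. l < length xi \<and> xi ! l \<noteq> lam L ! l} \<union> {j-1, j})"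
    unfolding ndiff_def by (rule card_mono[OF _ sub]) auto
  also have "\<dots> \<le> card {l. l < length xi \<and> xi ! l \<noteq> lam L ! l} + card {j-1, j}"
    by (rule card_Un_le)
  also have "\<dots> \<le> ndiff xi (lam L) + 2"
    unfolding ndiff_def by (auto simp: card_insert_if)
  finally show ?thesis .
qed

lemma ndiff_lam: "ndiff (lam L) (lam L) = 0" by (simp add: ndiff_def)

lemma Dbound_nonneg: "L \<ge> 2 \<Longrightarrow> Dbound L \<ge> 0"
proof -
  assume "L \<ge> 2"
  hence "log 2 2 \<le> log 2 (real L)" by (subst log_le_cancel_iff) auto
  hence "1 \<le> log 2 (real L)" by simp
  thus ?thesis unfolding Dbound_def by linarith
qed

lemma Sset_sub: "Sset L \<subseteq> Xlam L"
proof
  fix xi assume "xi \<in> Sset L"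
  hence "(\<lambda>a b. adj_swap L a b \<and> int (ndiff a (lam L)) \<le> Dbound L
                      \<and> int (ndiff b (lam L)) \<le> Dbound L)\<^sup>*\<^sup>* (lam L) xi" by (simp add: Sset_def)
  hence "(adj_swap L)\<^sup>*\<^sup>* (lam L) xi"
    by (rule rtranclp_mono[THEN predicate2D, rotated]) auto
  thus "xi \<in> Xlam L" by (simp add: Xlam_def)
qed

lemma Sset_bound:
  assumes "L \<ge> 2" "xi \<in> Sset L"
  shows "int (ndiff xi (lam L)) \<le> Dbound L"
proof -
  have "(\<lambda>a b. adj_swap L a b \<and> int (ndiff a (lam L)) \<le> Dbound L
                      \<and> int (ndiff b (lam L)) \<le> Dbound L)\<^sup>*\<^sup>* (lam L) xi" using assms by (simp add: Sset_def)
  thus ?thesis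
  proof (cases rule: rtranclp.cases)
    case rtrancl_refl thus ?thesis using Dbound_nonneg[OF assms(1)] by (simp add: ndiff_lam)
  next
    case (rtrancl_into_rtrancl b) thus ?thesis by simp
  qed
qed

lemma boundary:
  assumes "L \<ge> 2" "xi \<in> Sset L" "eta \<in> Xlam L - Sset L" "adj_swap L xi eta"
  shows "int (ndiff xi (lam L)) \<ge> Dbound L - 1"
proof -
  have xs: "(\<lambda>a b. adj_swap L a b \<and> int (ndiff a (lam L)) \<le> Dbound L
                      \<and> int (ndiff b (lam L)) \<le> Dbound L)\<^sup>*\<^sup>* (lam L) xi" using assms by (simp add: Sset_def)
  have "\<not> int (ndiff eta (lam L)) \<le> Dbound L"
  proof
    assume "int (ndiff eta (lam L)) \<le> Dbound L"
    hence "(\<lambda>a b. adj_swap L a b \<and> int (ndiff a (lam L)) \<le> Dbound L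
                      \<and> int (ndiff b (lam L)) \<le> Dbound L)\<^sup>*\<^sup>* (lam L) eta"
      using xs Sset_bound[OF assms(1,2)] assms(4) by (auto intro: rtranclp.rtrancl_into_rtrancl)
    thus False using assms(3) by (simp add: Sset_def)
  qed
  moreover obtain j where j: "j \<in> {1..L}" "eta = swap_adj j xi" using assms(4) by (auto simp: adj_swap_def)
  moreover have "length xi = L + 1" using Xlam_props Sset_sub assms(2) by blast
  ultimately have "ndiff eta (lam L) \<le> ndiff xi (lam L) + 2"
    "\<not> int (ndiff eta (lam L)) \<le> Dbound L" using ndiff_swap[of xi L j] by auto
  thus ?thesis by linarith
qed


lemma wt_pos: "L \<ge> 2 \<Longrightarrow> wt L i k > 0"
proof -
  assume L: "L \<ge> 2"
  have g: "gam L > 0" using gam_ge[OF L] by simp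
  have "(\<Sum>r\<in>{0..L}. gam L powi ((2 * int r + 1) * (int i + 1) - (int r)^2 - int r)) \<ge> 0"
    using g by (intro sum_nonneg) simp
  moreover have "gam L powi (2 * (int i + 1) * int k - (int k)^2 + 1) > 0" using g by simp
  ultimately show ?thesis unfolding wt_def by linarith
qed

lemma W_pos: "L \<ge> 2 \<Longrightarrow> (\<Sum>h\<in>{1..L+1}. wt L i h) > 0"
  by (intro sum_pos wt_pos) auto

lemma pii_pos: "L \<ge> 2 \<Longrightarrow> pii L i k > 0"
  unfolding pii_def using wt_pos W_pos by simp

lemma pibar_pos: "L \<ge> 2 \<Longrightarrow> pibar L xi > 0"
  unfolding pibar_def by (intro prod_pos pii_pos) auto

lemma Z_pos: "L \<ge> 2 \<Longrightarrow> (\<Sum>eta\<in>Xlam L. pibar L eta) > 0"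
  by (intro sum_pos finite_Xlam pibar_pos) (use lam_in in auto)

lemma pilam_nonneg: "L \<ge> 2 \<Longrightarrow> pilam L xi \<ge> 0"
  unfolding pilam_def using pibar_pos Z_pos by (simp add: less_imp_le)

lemma pilam_sum: "L \<ge> 2 \<Longrightarrow> (\<Sum>xi\<in>Xlam L. pilam L xi) = 1"
proof -
  assume L: "L \<ge> 2"
  have "(\<Sum>eta\<in>Xlam L. pibar L eta) > 0" using Z_pos[OF L] .
  thus ?thesis unfolding pilam_def by (simp add: sum_divide_distrib[symmetric])
qed

lemma lemmaA:
  fixes L :: nat and P :: "nat list \<Rightarrow> nat list \<Rightarrow> real" and t :: real and n :: nat
  assumes "L \<ge> 2"
    and P0: "\<forall>xi\<in>Xlam L. \<forall>eta\<in>Xlam L. P xi eta \<ge> 0"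
    and P1: "\<forall>xi\<in>Xlam L. (\<Sum>eta\<in>Xlam L. P xi eta) = 1"
    and t: "t \<ge> 1"
    and hyp: "\<And>xi eta. xi \<in> Sset L \<Longrightarrow> eta \<in> Xlam L - Sset L \<Longrightarrow> P xi eta > 0 \<Longrightarrow> ndiff xi (lam L) \<ge> n"
  shows "(\<Sum>xi\<in>Sset L. \<Sum>eta\<in>Xlam L - Sset L. pilam L xi * P xi eta)
           \<le> (\<Sum>xi\<in>Xlam L. t ^ ndiff xi (lam L) * pilam L xi) / t ^ n"
proof -
  have fS: "finite (Sset L)" using finite_subset[OF Sset_sub finite_Xlam] .
  have tn: "t ^ n > 0" using t by simp
  have "(\<Sum>xi\<in>Sset L. \<Sum>eta\<in>Xlam L - Sset L. pilam L xi * P xi eta)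
      \<le> (\<Sum>xi\<in>Sset L. t ^ ndiff xi (lam L) * pilam L xi / t ^ n)"
  proof (intro sum_mono)
    fix xi assume xi: "xi \<in> Sset L"
    hence xX: "xi \<in> Xlam L" using Sset_sub by blast
    have pl: "pilam L xi \<ge> 0" using pilam_nonneg[OF assms(1)] .
    show "(\<Sum>eta\<in>Xlam L - Sset L. pilam L xi * P xi eta) \<le> t ^ ndiff xi (lam L) * pilam L xi / t ^ n"
    proof (cases "ndiff xi (lam L) \<ge> n")
      case True
      have "(\<Sum>eta\<in>Xlam L - Sset L. pilam L xi * P xi eta) = pilam L xi * (\<Sum>eta\<in>Xlam L - Sset L. P xi eta)"
        by (simp add: sum_distrib_left)
      also have "\<dots> \<le> pilam L xi * (\<Sum>eta\<in>Xlam L. P xi eta)"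
        using pl P0 xX by (intro mult_left_mono sum_mono2 finite_Xlam) auto
      also have "\<dots> = pilam L xi" using P1 xX by simp
      also have "\<dots> \<le> t ^ ndiff xi (lam L) / t ^ n * pilam L xi"
      proof -
        have "t ^ n \<le> t ^ ndiff xi (lam L)" using t True by (intro power_increasing) auto
        hence "1 \<le> t ^ ndiff xi (lam L) / t ^ n" using tn by simp
        from mult_right_mono[OF this pl] show ?thesis by simp
      qed
      finally show ?thesis by simp
    next
      case False
      have "\<forall>eta\<in>Xlam L - Sset L. P xi eta = 0"
      proof
        fix eta assume eta: "eta \<in> Xlam L - Sset L"
        have "\<not> P xi eta > 0" using hyp[OF xi eta] False by auto
        moreover have "P xi eta \<ge> 0" using P0 xX eta by auto
        ultimately show "P xi eta = 0" by simp
      qed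
      hence "(\<Sum>eta\<in>Xlam L - Sset L. pilam L xi * P xi eta) = 0" by simp
      also have "0 \<le> t ^ ndiff xi (lam L) * pilam L xi / t ^ n" using t pl by simp
      finally show ?thesis .
    qed
  qed
  also have "\<dots> \<le> (\<Sum>xi\<in>Xlam L. t ^ ndiff xi (lam L) * pilam L xi / t ^ n)"
    using t pilam_nonneg[OF assms(1)] by (intro sum_mono2 finite_Xlam Sset_sub) auto
  also have "\<dots> = (\<Sum>xi\<in>Xlam L. t ^ ndiff xi (lam L) * pilam L xi) / t ^ n"
    by (simp add: sum_divide_distrib)
  finally show ?thesis .
qed


lemma prod_term:
  assumes "xi \<in> Xlam L"
  shows "t ^ ndiff xi (lam L) * pibar L xi
       = (\<Prod>i\<in>{0..L}. (if xi ! i = i + 1 then 1 else t) * pii L i (xi ! i))"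
proof -
  have len: "length xi = L + 1" using Xlam_props[OF assms] by simp
  have set_eq: "{l. l < length xi \<and> xi ! l \<noteq> lam L ! l} = {0..L} \<inter> - {i. xi ! i = i + 1}"
    using len lam_nth[of _ L] by auto
  have "(\<Prod>i\<in>{0..L}. (if xi ! i = i + 1 then 1 else t))
      = (\<Prod>i\<in>{0..L} \<inter> {i. xi ! i = i + 1}. 1) * (\<Prod>i\<in>{0..L} \<inter> - {i. xi ! i = i + 1}. t)"
    by (rule prod.If_cases) simp
  also have "\<dots> = t ^ ndiff xi (lam L)"
    unfolding ndiff_def set_eq by simp
  finally have "(\<Prod>i\<in>{0..L}. (if xi ! i = i + 1 then 1 else t)) = t ^ ndiff xi (lam L)" .
  thus ?thesis unfolding pibar_def prod.distrib by simp
qed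

lemma sum_le_PiE:
  fixes f :: "nat \<Rightarrow> nat \<Rightarrow> real"
  assumes f0: "\<And>i k. f i k \<ge> 0"
  shows "(\<Sum>xi\<in>Xlam L. \<Prod>i\<in>{0..L}. f i (xi ! i))
       \<le> (\<Sum>h\<in>PiE {0..L} (\<lambda>_. {1..L+1}). \<Prod>i\<in>{0..L}. f i (h i))"
proof -
  define \<rho> where "\<rho> xi = restrict (\<lambda>i. xi ! i) {0..L}" for xi :: "nat list"
  have inj: "inj_on \<rho> (Xlam L)"
  proof (rule inj_onI)
    fix a b assume a: "a \<in> Xlam L" and b: "b \<in> Xlam L" and e: "\<rho> a = \<rho> b"
    have la: "length a = L + 1" using Xlam_props[OF a] by simp
    have lb: "length b = L + 1" using Xlam_props[OF b] by simp
    show "a = b"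
    proof (rule nth_equalityI)
      show "length a = length b" using la lb by simp
      fix i assume "i < length a"
      hence "i \<in> {0..L}" using la by simp
      thus "a ! i = b ! i" using fun_cong[OF e, of i] by (simp add: \<rho>_def)
    qed
  qed
  have img: "\<rho> ` Xlam L \<subseteq> PiE {0..L} (\<lambda>_. {1..L+1})"
  proof
    fix h assume "h \<in> \<rho> ` Xlam L"
    then obtain xi where xi: "xi \<in> Xlam L" "h = \<rho> xi" by blast
    have len: "length xi = L + 1" and st: "set xi \<subseteq> {1..L+1}" using Xlam_props[OF xi(1)] by auto
    have "\<forall>i\<in>{0..L}. xi ! i \<in> {1..L+1}"
    proof
      fix i assume "i \<in> {0..L}"
      hence "i < length xi" using len by simp
      hence "xi ! i \<in> set xi" by (rule nth_mem)
      thus "xi ! i \<in> {1..L+1}" using st by (rule subsetD[rotated])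
    qed
    thus "h \<in> PiE {0..L} (\<lambda>_. {1..L+1})" unfolding xi(2) \<rho>_def
      by (simp only: restrict_PiE_iff)
  qed
  have "(\<Sum>xi\<in>Xlam L. \<Prod>i\<in>{0..L}. f i (xi ! i)) = (\<Sum>xi\<in>Xlam L. \<Prod>i\<in>{0..L}. f i (\<rho> xi i))"
  proof (rule sum.cong[OF refl], rule prod.cong[OF refl])
    fix xi i assume "i \<in> {0..L}"
    thus "f i (xi ! i) = f i (\<rho> xi i)" by (simp add: \<rho>_def)
  qed
  also have "\<dots> = (\<Sum>h\<in>\<rho> ` Xlam L. \<Prod>i\<in>{0..L}. f i (h i))"
    using sum.reindex[OF inj, of "\<lambda>h. \<Prod>i\<in>{0..L}. f i (h i)"] by (simp add: comp_def)
  also have "\<dots> \<le> (\<Sum>h\<in>PiE {0..L} (\<lambda>_. {1..L+1}). \<Prod>i\<in>{0..L}. f i (h i))"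
  proof (rule sum_mono2[OF _ img])
    show "finite (PiE {0..L} (\<lambda>_. {1..L+1}))" by (rule finite_PiE) auto
    fix h show "0 \<le> (\<Prod>i\<in>{0..L}. f i (h i))" using f0 by (simp add: prod_nonneg)
  qed
  finally show ?thesis .
qed

lemma frac_aux:
  fixes W w t S :: real
  assumes "W > 0" "w > 0"
  shows "(w / W + t * (S / W)) / (w / W) = 1 + t * (S / w)"
proof -
  have 1: "w / W + t * (S / W) = (w + t * S) / W" by (simp add: add_divide_distrib)
  have 2: "((w + t * S) / W) / (w / W) = (w + t * S) / w" using assms by simp
  have 3: "(w + t * S) / w = 1 + t * (S / w)" using assms by (simp add: add_divide_distrib)
  show ?thesis using 1 2 3 by simp
qed

lemma factor_eq:
  assumes L: "L \<ge> 2" and i: "i \<le> L"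
  shows "(\<Sum>k\<in>{1..L+1}. (if k = i + 1 then 1 else t) * pii L i k) / pii L i (i+1)
       = 1 + t * ((\<Sum>k\<in>{1..L+1}-{i+1}. wt L i k) / wt L i (i+1))"
proof -
  define W where "W = (\<Sum>h\<in>{1..L+1}. wt L i h)"
  define A where "A = {1..L+1}-{i+1}"
  define F where "F k = (if k = i + 1 then 1 else t) * pii L i k" for k
  have W: "W > 0" using W_pos[OF L] by (simp add: W_def)
  have w: "wt L i (i+1) > 0" using wt_pos[OF L] .
  have mem: "i + 1 \<in> {1..L+1}" using i by simp
  have fin: "finite {1..L+1}" by simp
  have p: "pii L i (i+1) = wt L i (i+1) / W" by (simp add: pii_def W_def)
  have s1: "sum F {1..L+1} = F (i+1) + sum F A"
    unfolding A_def using sum.remove[OF fin mem, of F] .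
  have s2: "F (i+1) = wt L i (i+1) / W" unfolding F_def p by simp
  have "sum F A = (\<Sum>k\<in>A. t * pii L i k)"
    by (rule sum.cong) (auto simp: A_def F_def)
  also have "\<dots> = t * (\<Sum>k\<in>A. pii L i k)" by (simp only: sum_distrib_left)
  also have "(\<Sum>k\<in>A. pii L i k) = (\<Sum>k\<in>A. wt L i k) / W"
    unfolding pii_def W_def by (simp only: sum_divide_distrib)
  finally have s3: "sum F A = t * ((\<Sum>k\<in>A. wt L i k) / W)" .
  have "(\<Sum>k\<in>{1..L+1}. (if k = i + 1 then 1 else t) * pii L i k) = sum F {1..L+1}"
    by (rule sum.cong) (simp_all add: F_def)
  also have "\<dots> = wt L i (i+1) / W + t * ((\<Sum>k\<in>A. wt L i k) / W)"
    using s1 s2 s3 by simp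
  finally have e: "(\<Sum>k\<in>{1..L+1}. (if k = i + 1 then 1 else t) * pii L i k)
      = wt L i (i+1) / W + t * ((\<Sum>k\<in>A. wt L i k) / W)" .
  show ?thesis unfolding e p A_def[symmetric] using frac_aux[OF W w] .
qed

lemma lemmaC:
  assumes L: "L \<ge> 2"
  shows "(\<Sum>xi\<in>Xlam L. (real L + 1) ^ ndiff xi (lam L) * pilam L xi)
        \<le> (1 + (2 * real L + 3) / (real L + 1)^2) ^ (L + 1)"
proof -
  define t where "t = real L + 1"
  define f where "f i k = (if k = i + 1 then 1 else t) * pii L i k" for i k
  define Z where "Z = (\<Sum>eta\<in>Xlam L. pibar L eta)"
  have t1: "t \<ge> 1" by (simp add: t_def)
  have Z: "Z \<ge> pibar L (lam L)" unfolding Z_def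
    using pibar_pos[OF L] lam_in by (intro member_le_sum finite_Xlam) (auto intro: less_imp_le)
  have pl: "pibar L (lam L) > 0" using pibar_pos[OF L] .
  have pl_eq: "pibar L (lam L) = (\<Prod>i\<in>{0..L}. pii L i (i+1))"
    unfolding pibar_def using lam_nth[of _ L] by (intro prod.cong) auto
  have f0: "\<And>i k. f i k \<ge> 0" unfolding f_def using pii_pos[OF L] t1 by (simp add: less_imp_le)
  have "(\<Sum>xi\<in>Xlam L. t ^ ndiff xi (lam L) * pilam L xi)
      = (\<Sum>xi\<in>Xlam L. t ^ ndiff xi (lam L) * pibar L xi) / Z"
    by (simp add: pilam_def Z_def sum_divide_distrib)
  also have "\<dots> = (\<Sum>xi\<in>Xlam L. \<Prod>i\<in>{0..L}. f i (xi ! i)) / Z"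
    unfolding f_def by (simp add: prod_term)
  also have "\<dots> \<le> (\<Sum>h\<in>PiE {0..L} (\<lambda>_. {1..L+1}). \<Prod>i\<in>{0..L}. f i (h i)) / Z"
    using Z pl by (intro divide_right_mono sum_le_PiE f0) auto
  also have "\<dots> = (\<Prod>i\<in>{0..L}. \<Sum>k\<in>{1..L+1}. f i k) / Z"
    by (subst prod_sum_PiE) auto
  also have "\<dots> \<le> (\<Prod>i\<in>{0..L}. \<Sum>k\<in>{1..L+1}. f i k) / pibar L (lam L)"
    using Z pl f0 by (intro divide_left_mono prod_nonneg sum_nonneg mult_pos_pos) auto
  also have "\<dots> = (\<Prod>i\<in>{0..L}. (\<Sum>k\<in>{1..L+1}. f i k) / pii L i (i+1))"
    unfolding pl_eq by (rule prod_dividef[symmetric])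
  also have "\<dots> \<le> (\<Prod>i\<in>{0..L}. 1 + (2 * real L + 3) / (real L + 1)^2)"
  proof (intro prod_mono conjI)
    fix i assume i: "i \<in> {0..L}"
    show "0 \<le> (\<Sum>k\<in>{1..L+1}. f i k) / pii L i (i+1)"
      using f0 pii_pos[OF L] by (intro divide_nonneg_pos sum_nonneg) auto
    have "(\<Sum>k\<in>{1..L+1}. f i k) / pii L i (i+1)
        = 1 + t * ((\<Sum>k\<in>{1..L+1}-{i+1}. wt L i k) / wt L i (i+1))"
      unfolding f_def using factor_eq[OF L] i by simp
    also have "\<dots> \<le> 1 + t * ((2 * real L + 3) / gam L)"
    proof -
      have "(\<Sum>k\<in>{1..L+1}-{i+1}. wt L i k) / wt L i (i+1) \<le> (2 * real L + 3) / gam L"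
        using ratio_bound[OF L, of i] i wt_pos[OF L, of i "i+1"] by (simp add: pos_divide_le_eq)
      hence "t * ((\<Sum>k\<in>{1..L+1}-{i+1}. wt L i k) / wt L i (i+1)) \<le> t * ((2 * real L + 3) / gam L)"
        using t1 by (intro mult_left_mono) auto
      thus ?thesis by linarith
    qed
    also have "\<dots> = 1 + (2 * real L + 3) / (real L + 1)^2"
      by (simp add: t_def gam_def power2_eq_square power3_eq_cube)
    finally show "(\<Sum>k\<in>{1..L+1}. f i k) / pii L i (i+1) \<le> 1 + (2 * real L + 3) / (real L + 1)^2" .
  qed
  also have "\<dots> = (1 + (2 * real L + 3) / (real L + 1)^2) ^ (L + 1)" by simp
  finally show ?thesis by (simp add: t_def)
qed


lemma aux_a:
  fixes a :: real
  assumes "a > 0"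
  shows "a * ((2 * a + 1) / a^2) = 2 + 1 / a"
proof -
  have "a * ((2 * a + 1) / a^2) = (2 * a + 1) / a" using assms by (simp add: power2_eq_square)
  also have "\<dots> = 2 * a / a + 1 / a" by (simp add: add_divide_distrib)
  also have "\<dots> = 2 + 1 / a" using assms by simp
  finally show ?thesis .
qed

lemma exp_part:
  assumes "L \<ge> 8"
  shows "(1 + (2 * real L + 3) / (real L + 1)^2) ^ (L + 1) \<le> 4 * exp 1"
proof -
  define y where "y = (2 * real L + 3) / (real L + 1)^2"
  define u where "u = 1 / (real L + 1)"
  have "(1 + y) ^ (L + 1) \<le> exp y ^ (L + 1)"
    by (intro power_mono) (auto simp: y_def add_nonneg_nonneg)
  also have "\<dots> = exp (real (L + 1) * y)" by (simp only: exp_of_nat_mult)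
  also have "real (L + 1) * y = 2 + u"
  proof -
    have a: "real L + 1 > 0" by simp
    have "real (L + 1) * y = (real L + 1) * ((2 * (real L + 1) + 1) / (real L + 1)^2)"
      by (simp add: y_def algebra_simps)
    also have "\<dots> = 2 + 1 / (real L + 1)"
      using a aux_a by blast
    finally show ?thesis by (simp add: u_def)
  qed
  also have "exp (2 + u) = exp 1 * exp 1 * exp u"
    by (simp flip: exp_add)
  also have "\<dots> \<le> exp 1 * 3 * (11/9)"
  proof (intro mult_mono)
    have u: "0 \<le> u" "u \<le> 1/9" using assms by (auto simp: u_def field_simps)
    have "exp u \<le> 1 + 2 * u" by (rule real_exp_bound_lemma) (use u in auto)
    thus "exp u \<le> 11/9" using u by linarith
  qed (auto simp: exp_le)
  also have "\<dots> \<le> 4 * exp 1" by simp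
  finally show ?thesis by (simp add: y_def)
qed

lemma powi_ge_one:
  fixes x :: real and m :: int
  assumes "0 < x" "x \<le> 1" "m \<le> 0"
  shows "x powi m \<ge> 1"
proof -
  have "m = - int (nat (- m))" using assms(3) by simp
  hence "x powi m = inverse (x ^ nat (- m))"
    by (metis power_int_minus power_int_of_nat)
  moreover have "x ^ nat (-m) \<le> 1" using assms by (simp add: power_le_one)
  moreover have "x ^ nat (-m) > 0" using assms by simp
  ultimately show ?thesis using one_le_inverse by simp
qed

theorem lemma15:
  fixes L :: nat and P :: "nat list \<Rightarrow> nat list \<Rightarrow> real"
  assumes "L \<ge> 2"
    and "\<forall>xi\<in>Xlam L. \<forall>eta\<in>Xlam L. P xi eta \<ge> 0"
    and "\<forall>xi\<in>Xlam L. (\<Sum>eta\<in>Xlam L. P xi eta) = 1"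
    and "\<forall>xi\<in>Xlam L. \<forall>eta\<in>Xlam L. xi \<noteq> eta \<and> P xi eta > 0 \<longrightarrow> adj_swap L xi eta"
  shows "(\<Sum>xi\<in>Sset L. \<Sum>eta\<in>Xlam L - Sset L. pilam L xi * P xi eta)
           \<le> 4 * exp 1 * (1 / (real L + 1)) powi (\<lfloor>log 2 (real L)\<rfloor> - 2)"
proof -
  define k where "k = \<lfloor>log 2 (real L)\<rfloor>"
  define n where "n = nat (k - 2)"
  have D: "Dbound L = k - 1" by (simp add: Dbound_def k_def)
  have hyp: "ndiff xi (lam L) \<ge> n"
    if xi: "xi \<in> Sset L" and eta: "eta \<in> Xlam L - Sset L" and p: "P xi eta > 0" for xi eta
  proof -
    have xX: "xi \<in> Xlam L" using xi Sset_sub by blast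
    have "xi \<noteq> eta" using xi eta by blast
    hence "adj_swap L xi eta" using assms(4) xX eta p by blast
    from boundary[OF assms(1) xi eta this] have "int (ndiff xi (lam L)) \<ge> k - 2" using D by simp
    thus ?thesis by (simp add: n_def)
  qed
  show ?thesis
  proof (cases "k \<le> 2")
    case True
    have "(\<Sum>xi\<in>Sset L. \<Sum>eta\<in>Xlam L - Sset L. pilam L xi * P xi eta)
        \<le> (\<Sum>xi\<in>Xlam L. 1 ^ ndiff xi (lam L) * pilam L xi) / 1 ^ 0"
      by (rule lemmaA[OF assms(1-3)]) auto
    also have "\<dots> = 1" using pilam_sum[OF assms(1)] by simp
    also have "\<dots> \<le> 4 * exp 1 * 1" using exp_ge_add_one_self[of 1] by simp
    also have "\<dots> \<le> 4 * exp 1 * (1 / (real L + 1)) powi (k - 2)"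
      using True by (intro mult_left_mono powi_ge_one) auto
    finally show ?thesis by (simp add: k_def)
  next
    case False
    have "3 \<le> log 2 (real L)" using False unfolding k_def by linarith
    moreover have "log 2 (8::real) = 3" using log_pow_cancel[of "2::real" 3] by simp
    ultimately have "log 2 8 \<le> log 2 (real L)" by simp
    hence L8: "L \<ge> 8" using assms(1) by (subst (asm) log_le_cancel_iff) auto
    have kn: "k - 2 = int n" using False by (simp add: n_def)
    define t where "t = real L + 1"
    have t1: "t \<ge> 1" by (simp add: t_def)
    have "(\<Sum>xi\<in>Sset L. \<Sum>eta\<in>Xlam L - Sset L. pilam L xi * P xi eta)
        \<le> (\<Sum>xi\<in>Xlam L. t ^ ndiff xi (lam L) * pilam L xi) / t ^ n"
      by (rule lemmaA[OF assms(1-3) t1 hyp])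
    also have "\<dots> \<le> 4 * exp 1 / t ^ n"
      using lemmaC[OF assms(1)] exp_part[OF L8] t1
      by (intro divide_right_mono) (auto simp: t_def)
    also have "\<dots> = 4 * exp 1 * (1 / (real L + 1)) powi (k - 2)"
      unfolding kn by (simp add: t_def power_one_over)
    finally show ?thesis by (simp add: k_def)
  qed
qed

end
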